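(* Let $E,E'$ be Stone spaces and let $\Phi\colon\mathscr{C}(E)\to\mathscr{C}(E')$ be a graph isomorphism. Then for every pants decomposition $\Gamma$ of $E$, the set $\Phi(\Gamma)$ is a pants decomposition of $E'$, and $\Phi$ restricts to a graph isomorphism $A(\Gamma)\to A(\Phi(\Gamma))$.
   Context: A Stone space is a compact, Hausdorff, totally disconnected space. A cut of $E$ is an unordered partition of $E$ into two disjoint clopen sets $U,V$, written $U\sqcup V$; it is non-peripheral if each of $U,V$ contains at least two points. Two cuts $U\sqcup V$, $U'\sqcup V'$ cross if all four sets $U\cap U'$, $U\cap V'$, $V\cap U'$, $V\cap V'$ are nonempty; otherwise they are compatible. The complex of cuts $\mathscr{C}(E)$ is the simplicial graph whose vertices are the non-peripheral cuts, with edges between distinct compatible cuts. A pants decomposition of $E$ is a countable collection $\Gamma$ of non-peripheral cuts such that: (1) any two cuts in $\Gamma$ are compatible; (2) every non-peripheral cut $\gamma\notin\Gamma$ crosses some cut of $\Gamma$; (3) every non-peripheral cut $\gamma\notin\Gamma$ crosses only finitely many cuts of $\Gamma$. Two cuts $\gamma_i,\gamma_j\in\Gamma$ are adjacent in $\Gamma$ if there is a non-peripheral cut $\gamma$ crossing $\gamma_i$ and $\gamma_j$ and no other cut of $\Gamma$. The adjacency graph $A(\Gamma)$ is the simplicial graph with vertex set $\Gamma$ and an edge between $\gamma_i$ and $\gamma_j$ whenever they are adjacent in $\Gamma$. *)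

theory Defs
  imports "HOL-Analysis.Analysis"
begin

definition totally_disconnected_space :: "'a topology \<Rightarrow> bool" where
  "totally_disconnected_space X \<longleftrightarrow>
     (\<forall>S. S \<subseteq> topspace X \<and> connectedin X S \<longrightarrow> (\<forall>x\<in>S. \<forall>y\<in>S. x = y))"

definition stone_space :: "'a topology \<Rightarrow> bool" where
  "stone_space X \<longleftrightarrow> compact_space X \<and> Hausdorff_space X \<and> totally_disconnected_space X"

definition clopenin :: "'a topology \<Rightarrow> 'a set \<Rightarrow> bool" where
  "clopenin X U \<longleftrightarrow> openin X U \<and> closedin X U"

definition nonperipheral_cut :: "'a topology \<Rightarrow> 'a set set \<Rightarrow> bool" where
  "nonperipheral_cut X c \<longleftrightarrow> (\<exists>U V. c = {U, V} \<and> clopenin X U \<and> clopenin X V \<and>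
       U \<inter> V = {} \<and> U \<union> V = topspace X \<and>
       (\<exists>a b. a \<in> U \<and> b \<in> U \<and> a \<noteq> b) \<and> (\<exists>a b. a \<in> V \<and> b \<in> V \<and> a \<noteq> b))"

definition cut_vertices :: "'a topology \<Rightarrow> 'a set set set" where
  "cut_vertices X = {c. nonperipheral_cut X c}"

definition cuts_cross :: "'a set set \<Rightarrow> 'a set set \<Rightarrow> bool" where
  "cuts_cross c d \<longleftrightarrow> (\<forall>A\<in>c. \<forall>B\<in>d. A \<inter> B \<noteq> {})"

definition cut_edge :: "'a topology \<Rightarrow> 'a set set \<Rightarrow> 'a set set \<Rightarrow> bool" where
  "cut_edge X c d \<longleftrightarrow> c \<in> cut_vertices X \<and> d \<in> cut_vertices X \<and> c \<noteq> d \<and> \<not> cuts_cross c d"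

definition cut_complex_iso ::
    "'a topology \<Rightarrow> 'b topology \<Rightarrow> ('a set set \<Rightarrow> 'b set set) \<Rightarrow> bool" where
  "cut_complex_iso X Y \<Phi> \<longleftrightarrow> bij_betw \<Phi> (cut_vertices X) (cut_vertices Y) \<and>
     (\<forall>c\<in>cut_vertices X. \<forall>d\<in>cut_vertices X. cut_edge X c d \<longleftrightarrow> cut_edge Y (\<Phi> c) (\<Phi> d))"

definition pants_decomposition :: "'a topology \<Rightarrow> 'a set set set \<Rightarrow> bool" where
  "pants_decomposition X \<Gamma> \<longleftrightarrow>
     countable \<Gamma> \<and> \<Gamma> \<subseteq> cut_vertices X \<and>
     (\<forall>c\<in>\<Gamma>. \<forall>d\<in>\<Gamma>. \<not> cuts_cross c d) \<and>
     (\<forall>g\<in>cut_vertices X - \<Gamma>. \<exists>c\<in>\<Gamma>. cuts_cross g c) \<and>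
     (\<forall>g\<in>cut_vertices X - \<Gamma>. finite {c\<in>\<Gamma>. cuts_cross g c})"

text \<open>Adjacency in \<Gamma> (edge of the adjacency graph A(\<Gamma>); simplicial, so distinct).\<close>
definition pants_adjacent :: "'a topology \<Rightarrow> 'a set set set \<Rightarrow> 'a set set \<Rightarrow> 'a set set \<Rightarrow> bool" where
  "pants_adjacent X \<Gamma> c d \<longleftrightarrow> c \<in> \<Gamma> \<and> d \<in> \<Gamma> \<and> c \<noteq> d \<and>
     (\<exists>g\<in>cut_vertices X. {e\<in>\<Gamma>. cuts_cross g e} = {c, d})"

end

theory Submission
  imports Defs
begin

lemma no_self_cross:
  assumes "c \<in> cut_vertices X" shows "\<not> cuts_cross c c"
proof -
  from assms obtain U V where "c = {U,V}" "U \<inter> V = {}"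
    unfolding cut_vertices_def nonperipheral_cut_def by blast
  thus ?thesis unfolding cuts_cross_def by blast
qed

lemma cross_iff:
  assumes iso: "cut_complex_iso X Y \<Phi>" and c: "c \<in> cut_vertices X" and d: "d \<in> cut_vertices X"
  shows "cuts_cross c d \<longleftrightarrow> cuts_cross (\<Phi> c) (\<Phi> d)"
proof -
  have bij: "bij_betw \<Phi> (cut_vertices X) (cut_vertices Y)"
   and e: "cut_edge X c d \<longleftrightarrow> cut_edge Y (\<Phi> c) (\<Phi> d)" using iso c d unfolding cut_complex_iso_def by auto
  have Pc: "\<Phi> c \<in> cut_vertices Y" and Pd: "\<Phi> d \<in> cut_vertices Y"
    using bij c d by (auto simp: bij_betw_def)
  have inj: "\<Phi> c = \<Phi> d \<longleftrightarrow> c = d" using bij c d by (auto simp: bij_betw_def inj_on_def)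
  have "cuts_cross c d \<longleftrightarrow> c \<noteq> d \<and> \<not> cut_edge X c d"
    using c d no_self_cross[OF c] unfolding cut_edge_def by auto
  moreover have "cuts_cross (\<Phi> c) (\<Phi> d) \<longleftrightarrow> \<Phi> c \<noteq> \<Phi> d \<and> \<not> cut_edge Y (\<Phi> c) (\<Phi> d)"
    using Pc Pd no_self_cross[OF Pc] unfolding cut_edge_def by auto
  ultimately show ?thesis using e inj by simp
qed

theorem mainTheorem6:
  fixes X :: "'a topology" and Y :: "'b topology" and \<Phi> :: "'a set set \<Rightarrow> 'b set set"
  assumes "stone_space X" and "stone_space Y" and "cut_complex_iso X Y \<Phi>"
  shows "\<forall>\<Gamma>. pants_decomposition X \<Gamma> \<longrightarrow>
           pants_decomposition Y (\<Phi> ` \<Gamma>) \<and>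
           bij_betw \<Phi> \<Gamma> (\<Phi> ` \<Gamma>) \<and>
           (\<forall>c\<in>\<Gamma>. \<forall>d\<in>\<Gamma>. pants_adjacent X \<Gamma> c d \<longleftrightarrow> pants_adjacent Y (\<Phi> ` \<Gamma>) (\<Phi> c) (\<Phi> d))"
proof (intro allI impI)
  fix \<Gamma> assume P: "pants_decomposition X \<Gamma>"
  let ?V = "cut_vertices X" and ?W = "cut_vertices Y"
  have bij: "bij_betw \<Phi> ?V ?W" using assms(3) unfolding cut_complex_iso_def by auto
  have inj: "inj_on \<Phi> ?V" and img: "\<Phi> ` ?V = ?W" using bij by (auto simp: bij_betw_def)
  have cr: "\<And>c d. c \<in> ?V \<Longrightarrow> d \<in> ?V \<Longrightarrow> cuts_cross c d \<longleftrightarrow> cuts_cross (\<Phi> c) (\<Phi> d)"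
    using cross_iff[OF assms(3)] by blast
  have cnt: "countable \<Gamma>" and sub: "\<Gamma> \<subseteq> ?V" and comp: "\<forall>c\<in>\<Gamma>. \<forall>d\<in>\<Gamma>. \<not> cuts_cross c d"
    and ex: "\<forall>g\<in>?V - \<Gamma>. \<exists>c\<in>\<Gamma>. cuts_cross g c"
    and fin: "\<forall>g\<in>?V - \<Gamma>. finite {c\<in>\<Gamma>. cuts_cross g c}"
    using P unfolding pants_decomposition_def by auto
  have injG: "inj_on \<Phi> \<Gamma>" using inj sub inj_on_subset by blast
  have S: "\<And>g. g \<in> ?V \<Longrightarrow> {e\<in>\<Phi> ` \<Gamma>. cuts_cross (\<Phi> g) e} = \<Phi> ` {e\<in>\<Gamma>. cuts_cross g e}"
    using cr sub by auto
  have Wsplit: "\<And>h. h \<in> ?W - \<Phi> ` \<Gamma> \<Longrightarrow> \<exists>g\<in>?V - \<Gamma>. h = \<Phi> g"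
  proof -
    fix h assume h: "h \<in> ?W - \<Phi> ` \<Gamma>"
    then obtain g where "g \<in> ?V" "h = \<Phi> g" using img by blast
    with h show "\<exists>g\<in>?V - \<Gamma>. h = \<Phi> g" by blast
  qed
  have pd: "pants_decomposition Y (\<Phi> ` \<Gamma>)"
    unfolding pants_decomposition_def
  proof (intro conjI ballI)
    show "countable (\<Phi> ` \<Gamma>)" using cnt by simp
    show "\<Phi> ` \<Gamma> \<subseteq> ?W" using sub img by auto
  next
    fix c d assume "c \<in> \<Phi> ` \<Gamma>" "d \<in> \<Phi> ` \<Gamma>"
    then obtain c' d' where "c' \<in> \<Gamma>" "d' \<in> \<Gamma>" "c = \<Phi> c'" "d = \<Phi> d'" by blast
    then show "\<not> cuts_cross c d" using comp cr[of c' d'] sub by blast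
  next
    fix h assume "h \<in> ?W - \<Phi> ` \<Gamma>"
    then obtain g where g: "g \<in> ?V - \<Gamma>" "h = \<Phi> g" using Wsplit by blast
    then obtain c where "c \<in> \<Gamma>" "cuts_cross g c" using ex by blast
    then show "\<exists>c\<in>\<Phi> ` \<Gamma>. cuts_cross h c" using g cr sub by blast
  next
    fix h assume "h \<in> ?W - \<Phi> ` \<Gamma>"
    then obtain g where g: "g \<in> ?V - \<Gamma>" "h = \<Phi> g" using Wsplit by blast
    show "finite {c\<in>\<Phi> ` \<Gamma>. cuts_cross h c}" using S[of g] g fin by simp
  qed
  have adj: "pants_adjacent X \<Gamma> c d \<longleftrightarrow> pants_adjacent Y (\<Phi> ` \<Gamma>) (\<Phi> c) (\<Phi> d)"
    if c: "c \<in> \<Gamma>" and d: "d \<in> \<Gamma>" for c d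
  proof -
    have key: "{e\<in>\<Phi> ` \<Gamma>. cuts_cross (\<Phi> g) e} = {\<Phi> c, \<Phi> d} \<longleftrightarrow> {e\<in>\<Gamma>. cuts_cross g e} = {c, d}"
      if g: "g \<in> ?V" for g
    proof -
      have "{e\<in>\<Phi> ` \<Gamma>. cuts_cross (\<Phi> g) e} = {\<Phi> c, \<Phi> d} \<longleftrightarrow> \<Phi> ` {e\<in>\<Gamma>. cuts_cross g e} = \<Phi> ` {c, d}"
        using S[OF g] by simp
      also have "\<dots> \<longleftrightarrow> {e\<in>\<Gamma>. cuts_cross g e} = {c, d}"
      proof -
        have "{c, d} \<subseteq> \<Gamma>" "{e\<in>\<Gamma>. cuts_cross g e} \<subseteq> \<Gamma>" using c d by auto
        from inj_on_image_eq_iff[OF injG this(2) this(1)] show ?thesis .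
      qed
      finally show ?thesis .
    qed
    have neq: "\<Phi> c = \<Phi> d \<longleftrightarrow> c = d" using injG c d by (auto simp: inj_on_def)
    show ?thesis
    proof
      assume "pants_adjacent X \<Gamma> c d"
      then have g3: "c \<noteq> d" and "\<exists>g\<in>?V. {e\<in>\<Gamma>. cuts_cross g e} = {c, d}"
        unfolding pants_adjacent_def by (simp_all only: simp_thms)
      then obtain g where g: "g \<in> ?V" "{e\<in>\<Gamma>. cuts_cross g e} = {c, d}"
        by (elim bexE)
      have W: "\<Phi> g \<in> ?W" using g(1) img by blast
      have E: "{e\<in>\<Phi> ` \<Gamma>. cuts_cross (\<Phi> g) e} = {\<Phi> c, \<Phi> d}" using key[OF g(1)] g(2) by (rule iffD2)
      have N: "\<Phi> c \<noteq> \<Phi> d" using neq g3 by simp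
      have C: "\<Phi> c \<in> \<Phi> ` \<Gamma>" "\<Phi> d \<in> \<Phi> ` \<Gamma>" using c d by auto
      have "\<exists>h\<in>?W. {e\<in>\<Phi> ` \<Gamma>. cuts_cross h e} = {\<Phi> c, \<Phi> d}"
        using E W by (intro bexI[where x="\<Phi> g"])
      then show "pants_adjacent Y (\<Phi> ` \<Gamma>) (\<Phi> c) (\<Phi> d)"
        unfolding pants_adjacent_def using N C by (simp only: simp_thms)
    next
      assume A: "pants_adjacent Y (\<Phi> ` \<Gamma>) (\<Phi> c) (\<Phi> d)"
      have h3: "\<Phi> c \<noteq> \<Phi> d" and "\<exists>h\<in>?W. {e\<in>\<Phi> ` \<Gamma>. cuts_cross h e} = {\<Phi> c, \<Phi> d}"
        using A unfolding pants_adjacent_def by (simp_all only: simp_thms)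
      then obtain h where h: "h \<in> ?W" "{e\<in>\<Phi> ` \<Gamma>. cuts_cross h e} = {\<Phi> c, \<Phi> d}"
        by (elim bexE)
      then obtain g where g: "g \<in> ?V" "h = \<Phi> g" using img by blast
      have E: "{e\<in>\<Gamma>. cuts_cross g e} = {c, d}" using key[OF g(1)] h(2) unfolding g(2) by (rule iffD1)
      have N: "c \<noteq> d" using h3 by blast
      have "\<exists>g'\<in>?V. {e\<in>\<Gamma>. cuts_cross g' e} = {c, d}" using E g(1) by (intro bexI[where x=g])
      then show "pants_adjacent X \<Gamma> c d"
        unfolding pants_adjacent_def using N c d by (simp only: simp_thms)
    qed
  qed
  show "pants_decomposition Y (\<Phi> ` \<Gamma>) \<and> bij_betw \<Phi> \<Gamma> (\<Phi> ` \<Gamma>) \<and>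
           (\<forall>c\<in>\<Gamma>. \<forall>d\<in>\<Gamma>. pants_adjacent X \<Gamma> c d \<longleftrightarrow> pants_adjacent Y (\<Phi> ` \<Gamma>) (\<Phi> c) (\<Phi> d))"
    using pd injG adj by (simp add: bij_betw_def)
qed

end
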